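(* Let $mG$ be a finite canonical misinformation game, $\Gamma=(\mathcal{AD}^*(\{mG\}),E)$ its adaptation graph, and $\Gamma'$ its loopless version. Then $mG$ is the only source node of $\Gamma'$, i.e., $mG$ is the only vertex of $\Gamma'$ with in-degree $d^-_{\Gamma'}(mG)=0$.
   Context: A normal-form game is $G=\langle N,S,P\rangle$ with finite players $N$, finite pure strategy sets $S_i$, positions $S=\times_i S_i$, payoffs $P_i:S\to\mathbb{R}$. A misinformation game $mG=\langle G^0,G^1,\dots,G^{|N|}\rangle$ consists of the actual game $G^0$ and subjective games $G^i$; it is canonical if all $G^i=\langle N,S,P^i\rangle$ differ from $G^0$ only in payoffs and in every $G^i$ all players have equally many pure strategies. $NME(mG)$ is the set of profiles $\sigma=(\sigma_1,\dots,\sigma_{|N|})$ such that each $\sigma_i$ is player $i$'s component of some Nash equilibrium of $G^i$. $\chi(\sigma)=\mathrm{supp}(\sigma_1)\times\dots\times\mathrm{supp}(\sigma_{|N|})$. For $\vec v\in S$, $mG_{\vec v}$ is obtained by replacing, in every $P^i$ ($i\ge1$), the payoff vector at position $\vec v$ by $P^0(\vec v)$. For a set $M$ of misinformation games, $\mathcal{AD}(M)=\{mG_{\vec u}: mG\in M,\sigma\in NME(mG),\vec u\in\chi(\sigma)\}$, $\mathcal{AD}^{(0)}(M)=M$, $\mathcal{AD}^{(t+1)}(M)=\mathcal{AD}^{(t)}(\mathcal{AD}(M))$, $\mathcal{AD}^*(M)=\bigcup_{t\ge0}\mathcal{AD}^{(t)}(M)$. The adaptation graph $\Gamma$ is the directed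 graph with vertex set $\mathcal{AD}^*(\{mG\})$ and an edge $(mG^1,mG^2)$ iff $mG^2=(mG^1)_{\vec v}$ for some $\sigma\in NME(mG^1)$ and $\vec v\in\chi(\sigma)$. Its loopless version $\Gamma'$ has the same vertices and the edges of $\Gamma$ with $mG^1\neq mG^2$. *)

theory Defs
  imports Complex_Main
begin

text \<open>
  A finite canonical misinformation game with players 0..<n (n = length m),
  player j having pure strategies {0..<m!j} in the actual game and in all
  subjective games.
  The payoff data is a function pay :: nat => nat list => nat => real:
  pay 0 is the actual game G^0, pay (Suc j) is the subjective game of player j
  (paper's player j+1); pay i s k is the payoff of player k at position s.
\<close>

type_synonym payoffs = "nat \<Rightarrow> nat list \<Rightarrow> nat \<Rightarrow> real"

definition positions :: "nat list \<Rightarrow> nat list set" where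
  "positions m = {s. length s = length m \<and> (\<forall>j<length m. s ! j < m ! j)}"

definition mixed_strategy :: "nat list \<Rightarrow> nat \<Rightarrow> (nat \<Rightarrow> real) \<Rightarrow> bool" where
  "mixed_strategy m j p \<longleftrightarrow> (\<forall>x. 0 \<le> p x) \<and> (\<forall>x. m ! j \<le> x \<longrightarrow> p x = 0)
      \<and> sum p {0..<m ! j} = 1"

definition mixed_profile :: "nat list \<Rightarrow> (nat \<Rightarrow> nat \<Rightarrow> real) \<Rightarrow> bool" where
  "mixed_profile m \<sigma> \<longleftrightarrow> (\<forall>j<length m. mixed_strategy m j (\<sigma> j))"

definition exp_payoff :: "nat list \<Rightarrow> (nat list \<Rightarrow> nat \<Rightarrow> real) \<Rightarrow> (nat \<Rightarrow> nat \<Rightarrow> real) \<Rightarrow> nat \<Rightarrow> real" where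
  "exp_payoff m P \<sigma> k = (\<Sum>s\<in>positions m. (\<Prod>j<length m. \<sigma> j (s ! j)) * P s k)"

definition nash_eq :: "nat list \<Rightarrow> (nat list \<Rightarrow> nat \<Rightarrow> real) \<Rightarrow> (nat \<Rightarrow> nat \<Rightarrow> real) \<Rightarrow> bool" where
  "nash_eq m P \<sigma> \<longleftrightarrow> mixed_profile m \<sigma> \<and>
     (\<forall>k<length m. \<forall>\<tau>. mixed_strategy m k \<tau> \<longrightarrow>
        exp_payoff m P (\<sigma>(k := \<tau>)) k \<le> exp_payoff m P \<sigma> k)"

definition NME :: "nat list \<Rightarrow> payoffs \<Rightarrow> (nat \<Rightarrow> nat \<Rightarrow> real) set" where
  "NME m pay = {\<sigma>. \<forall>k<length m. \<exists>\<tau>. nash_eq m (pay (Suc k)) \<tau> \<and> \<sigma> k = \<tau> k}"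

definition chi :: "nat list \<Rightarrow> (nat \<Rightarrow> nat \<Rightarrow> real) \<Rightarrow> nat list set" where
  "chi m \<sigma> = {s \<in> positions m. \<forall>j<length m. \<sigma> j (s ! j) \<noteq> 0}"

definition adapt :: "nat list \<Rightarrow> payoffs \<Rightarrow> nat list \<Rightarrow> payoffs" where
  "adapt m pay v = (\<lambda>i s. if 1 \<le> i \<and> i \<le> length m \<and> s = v then pay 0 v else pay i s)"

definition AD :: "nat list \<Rightarrow> payoffs set \<Rightarrow> payoffs set" where
  "AD m M = {adapt m pay u | pay \<sigma> u. pay \<in> M \<and> \<sigma> \<in> NME m pay \<and> u \<in> chi m \<sigma>}"

definition AD_star :: "nat list \<Rightarrow> payoffs set \<Rightarrow> payoffs set" where
  "AD_star m M = (\<Union>t. (AD m ^^ t) M)"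

definition loopless_edges :: "nat list \<Rightarrow> payoffs \<Rightarrow> (payoffs \<times> payoffs) set" where
  "loopless_edges m mG = {(p, q). p \<in> AD_star m {mG} \<and> q \<in> AD_star m {mG} \<and> p \<noteq> q \<and>
      (\<exists>\<sigma>\<in>NME m p. \<exists>v\<in>chi m \<sigma>. q = adapt m p v)}"

definition source_nodes :: "nat list \<Rightarrow> payoffs \<Rightarrow> payoffs set" where
  "source_nodes m mG = {q \<in> AD_star m {mG}. \<forall>p. (p, q) \<notin> loopless_edges m mG}"

end

theory Submission
  imports Defs
begin

lemma AD_inv:
  "p \<in> (AD m ^^ t) {mG} \<Longrightarrow> \<forall>i s. p i s = mG i s \<or> p i s = mG 0 s"
proof (induction t arbitrary: p)
  case 0
  then show ?case by simp
next
  case (Suc t)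
  then obtain q \<sigma> u where q: "q \<in> (AD m ^^ t) {mG}" and p: "p = adapt m q u"
    unfolding AD_def by auto
  from Suc.IH[OF q] have h: "\<forall>i s. q i s = mG i s \<or> q i s = mG 0 s" .
  then have "q 0 s = mG 0 s" for s by metis
  with h show ?case unfolding p adapt_def by auto
qed

lemma in_star: "p \<in> (AD m ^^ t) {mG} \<Longrightarrow> p \<in> AD_star m {mG}"
  unfolding AD_star_def by blast

lemma reach:
  "q \<in> (AD m ^^ t) {mG} \<Longrightarrow> q = mG \<or> (\<exists>p. (p,q) \<in> loopless_edges m mG)"
proof (induction t arbitrary: q)
  case 0
  then show ?case by simp
next
  case (Suc t)
  then obtain p \<sigma> u where p: "p \<in> (AD m ^^ t) {mG}" and q: "q = adapt m p u"
    and s: "\<sigma> \<in> NME m p" and u: "u \<in> chi m \<sigma>"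
    unfolding AD_def by auto
  show ?case
  proof (cases "p = q")
    case True
    then show ?thesis using Suc.IH p by auto
  next
    case False
    have "(p, q) \<in> loopless_edges m mG"
      unfolding loopless_edges_def using in_star[OF p] in_star[OF Suc.prems] False s u q
      by blast
    then show ?thesis by blast
  qed
qed

theorem proposition18:
  fixes m :: "nat list" and mG :: payoffs
  assumes "\<forall>j<length m. 0 < m ! j"
  shows "source_nodes m mG = {mG}"
proof
  show "source_nodes m mG \<subseteq> {mG}"
  proof
    fix q assume "q \<in> source_nodes m mG"
    then obtain t where "q \<in> (AD m ^^ t) {mG}" and "\<forall>p. (p, q) \<notin> loopless_edges m mG"
      unfolding source_nodes_def AD_star_def by auto
    then show "q \<in> {mG}" using reach by blast
  qed
next
  have star: "mG \<in> AD_star m {mG}" using in_star[where t=0 and p=mG and m=m and mG=mG] by simp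
  have "(p, mG) \<notin> loopless_edges m mG" for p
  proof
    assume "(p, mG) \<in> loopless_edges m mG"
    then obtain v where ne: "p \<noteq> mG" and ps: "p \<in> AD_star m {mG}" and eq: "mG = adapt m p v"
      unfolding loopless_edges_def by auto
    from ps obtain t where "p \<in> (AD m ^^ t) {mG}" unfolding AD_star_def by auto
    from AD_inv[OF this] have h: "\<forall>i s. p i s = mG i s \<or> p i s = mG 0 s" .
    have "p i s = mG i s" for i s
    proof (cases "1 \<le> i \<and> i \<le> length m \<and> s = v")
      case True
      have "mG i s = p 0 v" using True eq unfolding adapt_def by metis
      moreover have "p 0 v = mG 0 v" using h by metis
      ultimately show ?thesis using h True by metis
    next
      case False
      then show ?thesis using eq unfolding adapt_def by metis
    qed
    then have "p = mG" by blast
    with ne show False by simp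
  qed
  with star show "{mG} \<subseteq> source_nodes m mG" unfolding source_nodes_def by auto
qed

end
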